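(* Let $F:\mathbb{R}^n\to\mathbb{R}^n$ be continuous, let $x^0\in\mathbb{R}^n$ be arbitrary, and consider the proximal point iteration $x^{k+1}=J_{\alpha F}(x^k)=(\mathrm{Id}+\alpha F)^{-1}(x^k)$ with $\alpha>0$. (i) If $F$ is strongly monotone with respect to a norm $\|\cdot\|$ with monotonicity parameter $c>0$, then for every $\alpha\in]0,\infty[$ the iteration converges to the unique zero $x^*$ of $F$, and for every $k\ge0$, $\|x^{k+1}-x^*\|\le\frac{1}{1+\alpha c}\|x^k-x^*\|$. (ii) If $F$ is monotone and globally Lipschitz continuous with respect to a diagonally weighted $\ell_1$ or $\ell_\infty$ norm $\|\cdot\|$, $\mathrm{diagL}(F)\neq0$, and $\{x:F(x)=0\}\neq\emptyset$, then for every $\alpha\in]0,\infty[$ the iteration converges to a zero of $F$.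
   Context: A weak pairing (WP) on $\mathbb{R}^n$ is a map $[\![\cdot,\cdot]\!]:\mathbb{R}^n\times\mathbb{R}^n\to\mathbb{R}$ that is subadditive and continuous in its first argument, satisfies $[\![\alpha x,y]\!]=[\![x,\alpha y]\!]=\alpha[\![x,y]\!]$ for $\alpha\ge0$ and $[\![-x,-y]\!]=[\![x,y]\!]$, $[\![x,x]\!]>0$ for $x\ne0$, and $|[\![x,y]\!]|\le[\![x,x]\!]^{1/2}[\![y,y]\!]^{1/2}$. It is compatible with a norm if $[\![x,x]\!]=\|x\|^2$. WPs are assumed to also satisfy Deimling's inequality $[\![x,y]\!]\le\|y\|\lim_{h\to0^+}h^{-1}(\|y+hx\|-\|y\|)$ and the curve norm derivative formula ($\|x(t)\|D^+\|x(t)\|=[\![\dot x(t),x(t)]\!]$ a.e. for differentiable curves). $F$ is monotone with monotonicity parameter $c\ge0$ w.r.t. $\|\cdot\|$ if for some compatible WP, $-[\![-(F(x)-F(y)),x-y]\!]\ge c\|x-y\|^2$ for all $x,y$ (monotone: $c=0$; strongly monotone: $c>0$). For continuous monotone $F$ and $\alpha>0$, $J_{\alpha F}=(\mathrm{Id}+\alpha F)^{-1}$ is a single-valued map defined on all of $\mathbb{R}^n$. For $\eta\in\mathbb{R}^n_{>0}$, the diagonally weighted norms are $\|x\|_{1,[\eta]}=\sum_i\eta_i|x_i|$ and $\|x\|_{\infty,[\eta]^{-1}}=\max_i|x_i|/\eta_i$. For Lipschitz $F$, $\mathrm{diagL}(F):=\sup_{x\in\mathbb{R}^n\setminus\Omega_F}\max_{i}(DF(x))_{ii}$,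 where $\Omega_F$ is the measure-zero set where $F$ is not differentiable. *)

theory Defs
  imports "HOL-Analysis.Analysis"
begin

definition is_norm_fun :: "(real^'n \<Rightarrow> real) \<Rightarrow> bool" where
  "is_norm_fun N \<longleftrightarrow>
     (\<forall>x. 0 \<le> N x) \<and> (\<forall>x. N x = 0 \<longleftrightarrow> x = 0) \<and>
     (\<forall>a x. N (a *\<^sub>R x) = \<bar>a\<bar> * N x) \<and> (\<forall>x y. N (x + y) \<le> N x + N y)"

definition weak_pairing :: "(real^'n \<Rightarrow> real^'n \<Rightarrow> real) \<Rightarrow> bool" where
  "weak_pairing W \<longleftrightarrow>
     (\<forall>x1 x2 y. W (x1 + x2) y \<le> W x1 y + W x2 y) \<and>
     (\<forall>y. continuous_on UNIV (\<lambda>x. W x y)) \<and>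
     (\<forall>a x y. a \<ge> 0 \<longrightarrow> W (a *\<^sub>R x) y = a * W x y \<and> W x (a *\<^sub>R y) = a * W x y) \<and>
     (\<forall>x y. W (- x) (- y) = W x y) \<and>
     (\<forall>x. x \<noteq> 0 \<longrightarrow> W x x > 0) \<and>
     (\<forall>x y. \<bar>W x y\<bar> \<le> sqrt (W x x) * sqrt (W y y))"

definition wp_compatible :: "(real^'n \<Rightarrow> real^'n \<Rightarrow> real) \<Rightarrow> (real^'n \<Rightarrow> real) \<Rightarrow> bool" where
  "wp_compatible W N \<longleftrightarrow> (\<forall>x. W x x = (N x)\<^sup>2)"

definition deimling_ineq :: "(real^'n \<Rightarrow> real^'n \<Rightarrow> real) \<Rightarrow> (real^'n \<Rightarrow> real) \<Rightarrow> bool" where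
  "deimling_ineq W N \<longleftrightarrow>
     (\<forall>x y. W x y \<le> N y * Lim (at_right 0) (\<lambda>h. (N (y + h *\<^sub>R x) - N y) / h))"

definition dini_upper_right :: "(real \<Rightarrow> real) \<Rightarrow> real \<Rightarrow> ereal" where
  "dini_upper_right g t = Limsup (at_right 0) (\<lambda>h. ereal ((g (t + h) - g t) / h))"

definition curve_norm_deriv :: "(real^'n \<Rightarrow> real^'n \<Rightarrow> real) \<Rightarrow> (real^'n \<Rightarrow> real) \<Rightarrow> bool" where
  "curve_norm_deriv W N \<longleftrightarrow>
     (\<forall>x :: real \<Rightarrow> real^'n. (\<forall>t. x differentiable (at t)) \<longrightarrow>
        (AE t in lborel. ereal (N (x t)) * dini_upper_right (\<lambda>s. N (x s)) t
                          = ereal (W (vector_derivative x (at t)) (x t))))"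

definition monotone_wrt :: "(real^'n \<Rightarrow> real) \<Rightarrow> (real^'n \<Rightarrow> real^'n) \<Rightarrow> real \<Rightarrow> bool" where
  "monotone_wrt N F c \<longleftrightarrow> c \<ge> 0 \<and>
     (\<exists>W. weak_pairing W \<and> wp_compatible W N \<and> deimling_ineq W N \<and> curve_norm_deriv W N \<and>
          (\<forall>x y. - W (- (F x - F y)) (x - y) \<ge> c * (N (x - y))\<^sup>2))"

definition resolvent :: "real \<Rightarrow> (real^'n \<Rightarrow> real^'n) \<Rightarrow> real^'n \<Rightarrow> real^'n" where
  "resolvent \<alpha> F x = (THE y. y + \<alpha> *\<^sub>R F y = x)"

definition proximal_iter :: "real \<Rightarrow> (real^'n \<Rightarrow> real^'n) \<Rightarrow> real^'n \<Rightarrow> nat \<Rightarrow> real^'n" where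
  "proximal_iter \<alpha> F x0 k = (resolvent \<alpha> F ^^ k) x0"

definition wl1 :: "real^'n \<Rightarrow> real^'n \<Rightarrow> real" where
  "wl1 \<eta> x = (\<Sum>i\<in>UNIV. \<eta> $ i * \<bar>x $ i\<bar>)"

definition wlinf :: "real^'n \<Rightarrow> real^'n \<Rightarrow> real" where
  "wlinf \<eta> x = Max (range (\<lambda>i. \<bar>x $ i\<bar> / \<eta> $ i))"

definition lipschitz_wrt :: "(real^'n \<Rightarrow> real) \<Rightarrow> (real^'n \<Rightarrow> real^'n) \<Rightarrow> bool" where
  "lipschitz_wrt N F \<longleftrightarrow> (\<exists>L. \<forall>x y. N (F x - F y) \<le> L * N (x - y))"

definition diagL :: "(real^'n \<Rightarrow> real^'n) \<Rightarrow> real" where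
  "diagL F = (SUP x\<in>{x. F differentiable (at x)}.
                 Max (range (\<lambda>i. frechet_derivative F (at x) (axis i 1) $ i)))"

end

theory Submission
  imports Defs "HOL-Homology.Invariance_of_Domain"
begin

section \<open>Norm functions\<close>

lemma nf_nonneg: "is_norm_fun N \<Longrightarrow> 0 \<le> N x"
  unfolding is_norm_fun_def by blast
lemma nf_eq0: "is_norm_fun N \<Longrightarrow> N x = 0 \<longleftrightarrow> x = 0"
  unfolding is_norm_fun_def by blast
lemma nf_scale: "is_norm_fun N \<Longrightarrow> N (a *\<^sub>R x) = \<bar>a\<bar> * N x"
  unfolding is_norm_fun_def by blast
lemma nf_tri: "is_norm_fun N \<Longrightarrow> N (x + y) \<le> N x + N y"
  unfolding is_norm_fun_def by blast
lemma nf_zero[simp]: "is_norm_fun N \<Longrightarrow> N 0 = 0"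
  using nf_eq0 by blast
lemma nf_neg: "is_norm_fun N \<Longrightarrow> N (- x) = N x"
  using nf_scale[of N "-1" x] by simp
lemma nf_commute: "is_norm_fun N \<Longrightarrow> N (x - y) = N (y - x)"
  using nf_neg[of N "x - y"] by simp
lemma nf_tri_diff: "is_norm_fun N \<Longrightarrow> N (x - z) \<le> N (x - y) + N (y - z)"
  using nf_tri[of N "x - y" "y - z"] by simp
lemma nf_tri_minus: "is_norm_fun N \<Longrightarrow> N (x - y) \<le> N x + N y"
  using nf_tri[of N x "- y"] nf_neg[of N y] by simp
lemma nf_rev_tri: "is_norm_fun N \<Longrightarrow> \<bar>N x - N y\<bar> \<le> N (x - y)"
  using nf_tri[of N "x - y" y] nf_tri[of N "y - x" x] nf_commute[of N x y] by auto

lemma nf_sum: "is_norm_fun N \<Longrightarrow> N (sum f S) \<le> (\<Sum>i\<in>S. N (f i))"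
proof (induction S rule: infinite_finite_induct)
  case (insert x F)
  then show ?case using nf_tri[of N "f x" "sum f F"] by simp
qed auto

lemma nf_upper:
  fixes N :: "real^'n \<Rightarrow> real"
  assumes "is_norm_fun N"
  shows "\<exists>C>0. \<forall>x. N x \<le> C * norm x"
proof -
  define C where "C = 1 + (\<Sum>i\<in>UNIV. N (axis i (1::real)) :: real)"
  have Cpos: "C > 0" unfolding C_def using nf_nonneg[OF assms] by (simp add: add_pos_nonneg sum_nonneg)
  have "N x \<le> C * norm x" for x
  proof -
    have "x = (\<Sum>i\<in>UNIV. (x $ i) *\<^sub>R axis i 1)"
      by (simp add: vec_eq_iff axis_def if_distrib cong: if_cong)
    then have "N x = N (\<Sum>i\<in>UNIV. (x $ i) *\<^sub>R axis i 1)" by simp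
    also have "\<dots> \<le> (\<Sum>i\<in>UNIV. N ((x $ i) *\<^sub>R axis i 1))" by (rule nf_sum[OF assms])
    also have "\<dots> = (\<Sum>i\<in>UNIV. \<bar>x $ i\<bar> * N (axis i 1))" using nf_scale[OF assms] by simp
    also have "\<dots> \<le> (\<Sum>i\<in>UNIV. norm x * N (axis i 1))"
      by (intro sum_mono mult_right_mono nf_nonneg[OF assms]) (metis component_le_norm_cart real_norm_def)
    also have "\<dots> = norm x * (C - 1)" by (simp add: C_def sum_distrib_left)
    also have "\<dots> \<le> C * norm x" by (simp add: algebra_simps)
    finally show ?thesis .
  qed
  then show ?thesis using Cpos by blast
qed

lemma nf_continuous:
  fixes N :: "real^'n \<Rightarrow> real"
  assumes "is_norm_fun N"
  shows "continuous_on S N"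
proof -
  obtain C where C: "C > 0" "\<forall>x. N x \<le> C * norm x" using nf_upper[OF assms] by blast
  have "C-lipschitz_on S N"
  proof (rule lipschitz_onI)
    fix x y assume "x \<in> S" "y \<in> S"
    have "dist (N x) (N y) = \<bar>N x - N y\<bar>" by (simp add: dist_real_def)
    also have "\<dots> \<le> N (x - y)" by (rule nf_rev_tri[OF assms])
    also have "\<dots> \<le> C * dist x y" using C by (simp add: dist_norm)
    finally show "dist (N x) (N y) \<le> C * dist x y" .
  qed (use C in auto)
  then show ?thesis by (rule lipschitz_on_continuous_on)
qed

lemma nf_lower:
  fixes N :: "real^'n \<Rightarrow> real"
  assumes "is_norm_fun N"
  shows "\<exists>c>0. \<forall>x. norm x \<le> c * N x"
proof -
  have cpt: "compact (sphere (0::real^'n) 1)" by simp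
  have ne: "sphere (0::real^'n) 1 \<noteq> {}"
  proof -
    have "axis undefined (1::real) \<in> sphere (0::real^'n) 1" by simp
    then show ?thesis by blast
  qed
  obtain m where m: "m \<in> sphere (0::real^'n) 1" "\<forall>y \<in> sphere 0 1. N m \<le> N y"
    using continuous_attains_inf[OF cpt ne nf_continuous[OF assms]] by blast
  have mpos: "N m > 0" using m(1) nf_eq0[OF assms, of m] nf_nonneg[OF assms, of m] by auto
  have "norm x \<le> (1 / N m) * N x" for x
  proof (cases "x = 0")
    case True then show ?thesis using assms by simp
  next
    case False
    then have "(1 / norm x) *\<^sub>R x \<in> sphere 0 1" by simp
    then have "N m \<le> N ((1 / norm x) *\<^sub>R x)" using m by blast
    also have "\<dots> = N x / norm x" using nf_scale[OF assms] by simp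
    finally have "N m * norm x \<le> N x" using False by (simp add: field_simps)
    then show ?thesis using mpos by (simp add: field_simps)
  qed
  then show ?thesis using mpos by (intro exI[of _ "1 / N m"]) auto
qed


section \<open>Weak pairing facts\<close>

lemma wp_zero_left: "weak_pairing W \<Longrightarrow> W 0 y = 0"
  unfolding weak_pairing_def by (metis mult_zero_left order_refl scaleR_zero_left)

lemma wp_subadd: "weak_pairing W \<Longrightarrow> W (x1 + x2) y \<le> W x1 y + W x2 y"
  unfolding weak_pairing_def by blast

lemma wp_hom1: "weak_pairing W \<Longrightarrow> a \<ge> 0 \<Longrightarrow> W (a *\<^sub>R x) y = a * W x y"
  unfolding weak_pairing_def by blast

lemma wp_cs:
  assumes "weak_pairing W" "wp_compatible W N" "is_norm_fun N"
  shows "\<bar>W a b\<bar> \<le> N a * N b"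
proof -
  have "\<bar>W a b\<bar> \<le> sqrt (W a a) * sqrt (W b b)" using assms(1) unfolding weak_pairing_def by blast
  also have "\<dots> = N a * N b" using assms(2) nf_nonneg[OF assms(3)]
    unfolding wp_compatible_def by simp
  finally show ?thesis .
qed

lemma wp_neg_self:
  assumes "weak_pairing W" "wp_compatible W N" "is_norm_fun N" "deimling_ineq W N"
  shows "W (- u) u = - (N u)\<^sup>2"
proof -
  have ev: "eventually (\<lambda>h. - N u = (N (u + h *\<^sub>R (- u)) - N u) / h) (at_right (0::real))"
  proof -
    have "eventually (\<lambda>h::real. 0 < h \<and> h < 1) (at_right 0)"
      using eventually_at_right_real[of 0 1] by simp
    then show ?thesis
    proof (rule eventually_mono)
      fix h :: real assume h: "0 < h \<and> h < 1"
      have "u + h *\<^sub>R (- u) = (1 - h) *\<^sub>R u" by (simp add: algebra_simps)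
      then have "N (u + h *\<^sub>R (- u)) = (1 - h) * N u" using nf_scale[OF assms(3)] h by simp
      then show "- N u = (N (u + h *\<^sub>R (- u)) - N u) / h" using h by (simp add: field_simps)
    qed
  qed
  have "((\<lambda>h. (N (u + h *\<^sub>R (- u)) - N u) / h) \<longlongrightarrow> - N u) (at_right 0)"
    by (rule Lim_transform_eventually[OF tendsto_const ev])
  then have L: "Lim (at_right 0) (\<lambda>h. (N (u + h *\<^sub>R (- u)) - N u) / h) = - N u"
    by (intro tendsto_Lim) simp_all
  have up: "W (- u) u \<le> - (N u)\<^sup>2"
    using assms(4) L unfolding deimling_ineq_def power2_eq_square by (metis mult_minus_right)
  have "0 = W (u + - u) u" using wp_zero_left[OF assms(1)] by simp
  also have "\<dots> \<le> W u u + W (- u) u" by (rule wp_subadd[OF assms(1)])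
  finally have "- (N u)\<^sup>2 \<le> W (- u) u" using assms(2) unfolding wp_compatible_def by simp
  then show ?thesis using up by simp
qed

lemma expand_of_mono:
  assumes "weak_pairing W" "wp_compatible W N" "is_norm_fun N"
    and "m * (N (x - y))\<^sup>2 \<le> - W (- (H x - H y)) (x - y)"
  shows "m * N (x - y) \<le> N (H x - H y)"
proof (cases "N (x - y) = 0")
  case True then show ?thesis using nf_nonneg[OF assms(3)] by simp
next
  case False
  then have pos: "N (x - y) > 0" using nf_nonneg[OF assms(3), of "x - y"] by simp
  have "- W (- (H x - H y)) (x - y) \<le> N (- (H x - H y)) * N (x - y)"
    using wp_cs[OF assms(1-3), of "- (H x - H y)" "x - y"] by linarith
  also have "\<dots> = N (H x - H y) * N (x - y)" by (simp only: nf_neg[OF assms(3), of "H x - H y"])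
  finally have "m * N (x - y) * N (x - y) \<le> N (H x - H y) * N (x - y)"
    using assms(4) by (simp add: power2_eq_square mult.assoc)
  then show ?thesis using pos by simp
qed

lemma resolvent_strong_mono:
  assumes "weak_pairing W" "wp_compatible W N" "is_norm_fun N" "deimling_ineq W N"
    and mono: "c * (N (x - y))\<^sup>2 \<le> - W (- (F x - F y)) (x - y)" and al: "\<alpha> \<ge> 0"
  shows "(1 + \<alpha> * c) * (N (x - y))\<^sup>2 \<le> - W (- ((x + \<alpha> *\<^sub>R F x) - (y + \<alpha> *\<^sub>R F y))) (x - y)"
proof -
  have eq: "- ((x + \<alpha> *\<^sub>R F x) - (y + \<alpha> *\<^sub>R F y)) = - (x - y) + \<alpha> *\<^sub>R (- (F x - F y))"
    by (simp add: algebra_simps)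
  have "W (- ((x + \<alpha> *\<^sub>R F x) - (y + \<alpha> *\<^sub>R F y))) (x - y)
        \<le> W (- (x - y)) (x - y) + W (\<alpha> *\<^sub>R (- (F x - F y))) (x - y)"
    unfolding eq by (rule wp_subadd[OF assms(1)])
  also have "\<dots> = - (N (x - y))\<^sup>2 + \<alpha> * W (- (F x - F y)) (x - y)"
    using wp_neg_self[OF assms(1-4), of "x - y"] wp_hom1[OF assms(1) al, of "- (F x - F y)" "x - y"] by argo
  also have "\<dots> \<le> - (N (x - y))\<^sup>2 - \<alpha> * (c * (N (x - y))\<^sup>2)"
  proof -
    have h: "W (- (F x - F y)) (x - y) \<le> - (c * (N (x - y))\<^sup>2)" using mono by linarith
    show ?thesis using mult_left_mono[OF h al] by linarith
  qed
  finally show ?thesis by (simp add: algebra_simps)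
qed


section \<open>Expanding continuous maps are bijective\<close>

lemma expand_bij:
  fixes H :: "real^'n \<Rightarrow> real^'n"
  assumes N: "is_norm_fun N" and cont: "continuous_on UNIV H" and m: "m > 0"
    and exp: "\<And>x y. m * N (x - y) \<le> N (H x - H y)"
  shows "\<exists>!y. H y = z"
proof -
  have inj: "inj H"
  proof (rule injI)
    fix x y assume "H x = H y"
    then have "m * N (x - y) \<le> 0" using exp[of x y] N by simp
    then have "N (x - y) = 0" using m nf_nonneg[OF N, of "x - y"] by (simp add: mult_le_0_iff)
    then show "x = y" using nf_eq0[OF N] by simp
  qed
  have op: "open (range H)"
    using invariance_of_domain[OF cont open_UNIV] inj by simp
  obtain C where C: "C > 0" "\<And>x. N x \<le> C * norm x" using nf_upper[OF N] by blast
  obtain c where c: "c > 0" "\<And>x. norm x \<le> c * N x" using nf_lower[OF N] by blast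
  have cl: "closed (range H)"
    unfolding closed_sequential_limits
  proof (intro allI impI, elim conjE)
    fix s l assume s: "\<forall>n. s n \<in> range H" and lim: "s \<longlonglongrightarrow> l"
    have "\<forall>n. \<exists>x. s n = H x" using s by auto
    then obtain y where y: "\<And>n. s n = H (y n)" by metis
    have "Cauchy s" using lim by (rule LIMSEQ_imp_Cauchy)
    have "Cauchy y"
    proof (rule CauchyI)
      fix e :: real assume e: "e > 0"
      define e' where "e' = e * m / (c * C)"
      have e': "e' > 0" using e m c C by (simp add: e'_def)
      obtain M where M: "\<forall>a\<ge>M. \<forall>b\<ge>M. norm (s a - s b) < e'"
        using CauchyD[OF \<open>Cauchy s\<close> e'] by blast
      have "norm (y a - y b) < e" if "a \<ge> M" "b \<ge> M" for a b
      proof -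
        have h1: "N (y a - y b) \<le> N (H (y a) - H (y b)) / m"
          using exp[of "y a" "y b"] m by (simp add: pos_le_divide_eq mult.commute)
        have h2: "N (H (y a) - H (y b)) \<le> C * norm (s a - s b)" using C(2)[of "s a - s b"] y by simp
        have h3: "norm (s a - s b) < e'" using M that by blast
        have "norm (y a - y b) \<le> c * N (y a - y b)" by (rule c)
        also have "\<dots> \<le> c * (N (H (y a) - H (y b)) / m)"
          by (rule mult_left_mono[OF h1]) (use c in simp)
        also have "\<dots> \<le> c * (C * norm (s a - s b) / m)"
          by (rule mult_left_mono[OF divide_right_mono[OF h2]]) (use c m in simp_all)
        also have "\<dots> < c * (C * e' / m)"
          by (rule mult_strict_left_mono[OF divide_strict_right_mono[OF mult_strict_left_mono[OF h3]]])
            (use c m C in simp_all)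
        also have "\<dots> = e" using m c C by (simp add: e'_def)
        finally show ?thesis .
      qed
      then show "\<exists>M. \<forall>a\<ge>M. \<forall>b\<ge>M. norm (y a - y b) < e" by blast
    qed
    then obtain q where q: "y \<longlonglongrightarrow> q" using Cauchy_convergent_iff convergent_def by blast
    have "(\<lambda>n. H (y n)) \<longlonglongrightarrow> H q"
    proof -
      have "isCont H q" using cont continuous_on_eq_continuous_at open_UNIV by blast
      then show ?thesis using isCont_tendsto_compose[OF _ q] by blast
    qed
    moreover have "s = (\<lambda>n. H (y n))" using y by auto
    ultimately have "l = H q" using lim LIMSEQ_unique by metis
    then show "l \<in> range H" by simp
  qed
  have "range H = UNIV" using clopen[of "range H"] op cl by auto
  then obtain y where "H y = z" by (metis UNIV_I imageE)
  moreover have "H y' = z \<Longrightarrow> y' = y" for y' using inj calculation by (metis injD)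
  ultimately show ?thesis by blast
qed


lemma proximal_iter_0: "proximal_iter \<alpha> F x0 0 = x0"
  unfolding proximal_iter_def by simp
lemma proximal_iter_Suc: "proximal_iter \<alpha> F x0 (Suc k) = resolvent \<alpha> F (proximal_iter \<alpha> F x0 k)"
  unfolding proximal_iter_def by simp

lemma resolvent_eq:
  assumes "\<exists>!y. y + \<alpha> *\<^sub>R F y = x"
  shows "resolvent \<alpha> F x + \<alpha> *\<^sub>R F (resolvent \<alpha> F x) = x"
  unfolding resolvent_def using theI'[OF assms] .

lemma resolvent_unique:
  assumes "\<exists>!y. y + \<alpha> *\<^sub>R F y = x" "y + \<alpha> *\<^sub>R F y = x"
  shows "resolvent \<alpha> F x = y"
  unfolding resolvent_def using the1_equality[OF assms] .

lemma conv_from_N: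
  fixes x :: "nat \<Rightarrow> real^'n"
  assumes N: "is_norm_fun N" and lim: "(\<lambda>k. N (x k - a)) \<longlonglongrightarrow> 0"
  shows "x \<longlonglongrightarrow> a"
proof -
  obtain c where c: "c > 0" "\<And>x. norm x \<le> c * N x" using nf_lower[OF N] by blast
  have "(\<lambda>k. c * N (x k - a)) \<longlonglongrightarrow> 0" using tendsto_mult_right_zero[OF lim] by simp
  then have "(\<lambda>k. x k - a) \<longlonglongrightarrow> 0"
    by (rule Lim_null_comparison[rotated]) (use c in auto)
  then show ?thesis using Lim_null[of x a] by simp
qed

lemma cont_G:
  assumes "continuous_on UNIV F"
  shows "continuous_on UNIV (\<lambda>x::real^'n. x + \<alpha> *\<^sub>R F x)"
  using assms by (intro continuous_intros) auto

lemma part1: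
  fixes F :: "real^'n \<Rightarrow> real^'n" and x0 :: "real^'n"
  assumes cont: "continuous_on UNIV F"
    and N: "is_norm_fun N" and mon: "monotone_wrt N F c" and c: "c > 0" and al: "\<alpha> > 0"
  shows "\<exists>xs. F xs = 0 \<and> (\<forall>y. F y = 0 \<longrightarrow> y = xs) \<and>
                  proximal_iter \<alpha> F x0 \<longlonglongrightarrow> xs \<and>
                  (\<forall>k. N (proximal_iter \<alpha> F x0 (Suc k) - xs)
                        \<le> 1 / (1 + \<alpha> * c) * N (proximal_iter \<alpha> F x0 k - xs))"
proof -
  obtain W where W: "weak_pairing W" "wp_compatible W N" "deimling_ineq W N"
    and mono: "\<And>x y. c * (N (x - y))\<^sup>2 \<le> - W (- (F x - F y)) (x - y)"
    using mon unfolding monotone_wrt_def by blast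
  define G where "G = (\<lambda>x::real^'n. x + \<alpha> *\<^sub>R F x)"
  have expG: "(1 + \<alpha> * c) * N (x - y) \<le> N (G x - G y)" for x y
    unfolding G_def
    by (rule expand_of_mono[OF W(1,2) N resolvent_strong_mono[OF W(1,2) N W(3) mono]]) (use al in simp)
  have expF: "c * N (x - y) \<le> N (F x - F y)" for x y
    by (rule expand_of_mono[OF W(1,2) N mono])
  have pc0: "1 + \<alpha> * c > 0" using al c by (simp add: add_pos_pos)
  have uG: "\<exists>!y. y + \<alpha> *\<^sub>R F y = z" for z
    using expand_bij[OF N cont_G[OF cont] pc0 expG[unfolded G_def]] .
  obtain xs where xs: "F xs = 0" "\<And>y. F y = 0 \<Longrightarrow> y = xs"
    using expand_bij[OF N cont c expF, of 0] by blast
  have Jxs: "resolvent \<alpha> F xs = xs" by (rule resolvent_unique[OF uG]) (simp add: xs)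
  define q where "q = 1 / (1 + \<alpha> * c)"
  have pc: "1 + \<alpha> * c > 1" using al c by simp
  have q: "0 < q" "q < 1" using pc by (simp_all add: q_def)
  have contr: "N (resolvent \<alpha> F a - xs) \<le> q * N (a - xs)" for a
  proof -
    have "(1 + \<alpha> * c) * N (resolvent \<alpha> F a - resolvent \<alpha> F xs)
        \<le> N (G (resolvent \<alpha> F a) - G (resolvent \<alpha> F xs))" by (rule expG)
    also have "\<dots> = N (a - xs)" unfolding G_def using resolvent_eq[OF uG] by simp
    finally have "(1 + \<alpha> * c) * N (resolvent \<alpha> F a - xs) \<le> N (a - xs)" using Jxs by simp
    then show ?thesis using pc by (simp add: q_def divide_simps mult.commute)
  qed
  let ?x = "proximal_iter \<alpha> F x0"
  have step: "N (?x (Suc k) - xs) \<le> q * N (?x k - xs)" for k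
    unfolding proximal_iter_Suc by (rule contr)
  have geo: "N (?x k - xs) \<le> q ^ k * N (x0 - xs)" for k
  proof (induction k)
    case 0 then show ?case by (simp add: proximal_iter_0)
  next
    case (Suc k)
    have "N (?x (Suc k) - xs) \<le> q * N (?x k - xs)" by (rule step)
    also have "\<dots> \<le> q * (q ^ k * N (x0 - xs))" using Suc q by (simp add: mult_left_mono)
    finally show ?case by (simp add: mult.assoc)
  qed
  have "(\<lambda>k. q ^ k * N (x0 - xs)) \<longlonglongrightarrow> 0"
    using LIMSEQ_power_zero[of q] q by (intro tendsto_mult_left_zero) simp
  then have "(\<lambda>k. N (?x k - xs)) \<longlonglongrightarrow> 0"
    by (rule Lim_null_comparison[rotated]) (use geo nf_nonneg[OF N] in auto)
  then have "?x \<longlonglongrightarrow> xs" by (rule conv_from_N[OF N])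
  then show ?thesis using xs step unfolding q_def by blast
qed


lemma line_vd: "((\<lambda>s. z + s *\<^sub>R d) has_vector_derivative d) (at t)"
  by (auto intro!: derivative_eq_intros)

lemma line_diff: "(\<lambda>s. z + s *\<^sub>R (d::real^'n)) differentiable (at t)"
  using line_vd differentiableI_vector by blast

lemma line_vderiv: "vector_derivative (\<lambda>s. z + s *\<^sub>R (d::real^'n)) (at t) = d"
  using line_vd vector_derivative_at by blast

lemma ae_interval_point:
  assumes "AE t in lborel. P t" "(0::real) < s"
  shows "\<exists>t. 0 < t \<and> t < s \<and> P t"
proof (rule ccontr)
  assume nex: "\<not> ?thesis"
  from assms(1) obtain M where M: "{x \<in> space lborel. \<not> P x} \<subseteq> M" "emeasure lborel M = 0" "M \<in> sets lborel"
    by (rule AE_E)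
  have "{0<..<s} \<subseteq> M" using M(1) nex by auto
  then have "emeasure lborel {0<..<s} \<le> emeasure lborel M" by (rule emeasure_mono) (use M in simp)
  then show False using M(2) assms(2) by simp
qed

lemma convex_quot:
  assumes N: "is_norm_fun N" and t: "t > 0" and h: "h > 0"
  shows "(N (z + t *\<^sub>R d) - N z) / t \<le> (N (z + (t + h) *\<^sub>R d) - N (z + t *\<^sub>R d)) / h"
proof -
  have eq: "(t + h) *\<^sub>R (z + t *\<^sub>R d) = h *\<^sub>R z + t *\<^sub>R (z + (t + h) *\<^sub>R d)"
    by (simp add: algebra_simps)
  have "(t + h) * N (z + t *\<^sub>R d) = N ((t + h) *\<^sub>R (z + t *\<^sub>R d))"
    using nf_scale[OF N, of "t + h"] t h by simp
  also have "\<dots> \<le> N (h *\<^sub>R z) + N (t *\<^sub>R (z + (t + h) *\<^sub>R d))" unfolding eq by (rule nf_tri[OF N])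
  also have "\<dots> = h * N z + t * N (z + (t + h) *\<^sub>R d)" using nf_scale[OF N] t h by simp
  finally have "(t + h) * N (z + t *\<^sub>R d) \<le> h * N z + t * N (z + (t + h) *\<^sub>R d)" .
  then have "h * (N (z + t *\<^sub>R d) - N z) \<le> t * (N (z + (t + h) *\<^sub>R d) - N (z + t *\<^sub>R d))"
    by (simp add: algebra_simps)
  then show ?thesis using t h by (simp add: divide_simps mult.commute)
qed

lemma mon_quad:
  fixes F :: "real^'n \<Rightarrow> real^'n"
  assumes N: "is_norm_fun N" and W: "weak_pairing W" "wp_compatible W N" "curve_norm_deriv W N"
    and mono: "\<And>x y. W (- (F x - F y)) (x - y) \<le> 0"
    and lip: "\<And>x y. N (F x - F y) \<le> L * N (x - y)"
    and s: "s > 0"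
  shows "\<exists>t. 0 < t \<and> t < s \<and> N (x - y + t *\<^sub>R (- (F x - F y))) \<le> N (x - y) + L * t\<^sup>2 * N (F x - F y)"
proof -
  define z where "z = x - y"
  define d where "d = - (F x - F y)"
  define g where "g = (\<lambda>s. N (z + s *\<^sub>R d))"
  have "AE t in lborel. ereal (N (z + t *\<^sub>R d)) * dini_upper_right (\<lambda>s. N (z + s *\<^sub>R d)) t
                          = ereal (W (vector_derivative (\<lambda>s. z + s *\<^sub>R d) (at t)) (z + t *\<^sub>R d))"
    using W(3) line_diff unfolding curve_norm_deriv_def by blast
  then have "AE t in lborel. ereal (g t) * dini_upper_right g t = ereal (W d (z + t *\<^sub>R d))"
    unfolding line_vderiv g_def .
  then obtain t where t: "0 < t" "t < s" and P: "ereal (g t) * dini_upper_right g t = ereal (W d (z + t *\<^sub>R d))"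
    using ae_interval_point[OF _ s] by blast
  have Nd: "N d = N (F x - F y)" unfolding d_def by (rule nf_neg[OF N])
  have LNd: "0 \<le> L * N d"
  proof (cases "L \<ge> 0")
    case True then show ?thesis using nf_nonneg[OF N] by simp
  next
    case False
    then have "L * N (x - y) \<le> 0" using nf_nonneg[OF N, of "x - y"] by (simp add: mult_nonpos_nonneg)
    then have "N d \<le> 0" using Nd lip[of x y] by linarith
    then have "N d = 0" using nf_nonneg[OF N, of d] by simp
    then show ?thesis by simp
  qed
  have "g t - g 0 \<le> L * t\<^sup>2 * N d"
  proof (cases "g t = 0")
    case True
    have "0 \<le> t\<^sup>2 * (L * N d)" using LNd by simp
    then show ?thesis using True nf_nonneg[OF N, of z] unfolding g_def by (simp add: mult_ac)
  next
    case False
    then have gpos: "g t > 0" using nf_nonneg[OF N] unfolding g_def by (simp add: less_le)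
    define q where "q = (g t - g 0) / t"
    have "eventually (\<lambda>h. ereal q \<le> ereal ((g (t + h) - g t) / h)) (at_right 0)"
    proof -
      have "eventually (\<lambda>h::real. 0 < h) (at_right 0)" by (simp add: eventually_at_right_less)
      then show ?thesis
      proof (rule eventually_mono)
        fix h :: real assume h: "0 < h"
        show "ereal q \<le> ereal ((g (t + h) - g t) / h)"
          using convex_quot[OF N t(1) h, of z d] unfolding q_def g_def by simp
      qed
    qed
    then have "ereal q \<le> Liminf (at_right 0) (\<lambda>h. ereal ((g (t + h) - g t) / h))"
      by (rule Liminf_bounded)
    also have "\<dots> \<le> dini_upper_right g t" unfolding dini_upper_right_def
      by (rule Liminf_le_Limsup) simp
    finally have qD: "ereal q \<le> dini_upper_right g t" .
    obtain r where r: "dini_upper_right g t = ereal r" "g t * r = W d (z + t *\<^sub>R d)"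
      using P gpos by (cases "dini_upper_right g t") auto
    have Wb: "W d (z + t *\<^sub>R d) \<le> L * t * N d * g t"
    proof -
      define dt where "dt = - (F (x + t *\<^sub>R d) - F y)"
      have w: "z + t *\<^sub>R d = (x + t *\<^sub>R d) - y" unfolding z_def by simp
      have dd: "d = dt + (F (x + t *\<^sub>R d) - F x)" unfolding dt_def d_def by simp
      have A1: "W d (z + t *\<^sub>R d) \<le> W dt (z + t *\<^sub>R d) + W (F (x + t *\<^sub>R d) - F x) (z + t *\<^sub>R d)"
        using wp_subadd[OF W(1), of dt "F (x + t *\<^sub>R d) - F x" "z + t *\<^sub>R d"] dd by simp
      have A2: "W dt (z + t *\<^sub>R d) \<le> 0" using mono[of "x + t *\<^sub>R d" y] unfolding dt_def z_def by (simp add: diff_add_eq)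
      have A3: "W (F (x + t *\<^sub>R d) - F x) (z + t *\<^sub>R d) \<le> N (F (x + t *\<^sub>R d) - F x) * g t"
        unfolding g_def using wp_cs[OF W(1,2) N] abs_le_D1 by blast
      have A4: "N (F (x + t *\<^sub>R d) - F x) \<le> L * (t * N d)"
        using lip[of "x + t *\<^sub>R d" x] nf_scale[OF N, of t d] t by simp
      have A5: "N (F (x + t *\<^sub>R d) - F x) * g t \<le> L * (t * N d) * g t"
        using mult_right_mono[OF A4] gpos by simp
      show ?thesis using A1 A2 A3 A5 by (simp add: mult.assoc mult.commute mult.left_commute)
    qed
    have "q \<le> r" using qD r(1) by simp
    also have "r \<le> L * t * N d"
    proof -
      have "g t * r \<le> g t * (L * t * N d)" using r(2) Wb by (simp add: mult.commute)
      then show ?thesis using gpos by simp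
    qed
    finally have "(g t - g 0) / t \<le> L * t * N d" unfolding q_def .
    then show ?thesis using t by (simp add: pos_divide_le_eq power2_eq_square mult_ac)
  qed
  then have "N (z + t *\<^sub>R d) \<le> N z + L * t\<^sup>2 * N (F x - F y)" using Nd by (simp add: g_def)
  then show ?thesis using t unfolding z_def d_def by blast
qed


section \<open>Weighted l-infinity norm\<close>

lemma wlinf_le_iff: "wlinf \<eta> x \<le> B \<longleftrightarrow> (\<forall>i. \<bar>x $ i\<bar> / \<eta> $ i \<le> B)"
  unfolding wlinf_def by (simp add: Max_le_iff)

lemma wlinf_ge: "\<bar>x $ i\<bar> / \<eta> $ i \<le> wlinf \<eta> x"
  using wlinf_le_iff[of \<eta> x "wlinf \<eta> x"] by blast

lemma wlinf_attained: "\<exists>j. wlinf \<eta> x = \<bar>x $ j\<bar> / \<eta> $ j"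
proof -
  have "wlinf \<eta> x \<in> range (\<lambda>i. \<bar>x $ i\<bar> / \<eta> $ i)" unfolding wlinf_def by (rule Max_in) auto
  then show ?thesis by auto
qed

lemma wlinf_norm:
  assumes pos: "\<forall>i. \<eta> $ i > 0"
  shows "is_norm_fun (wlinf \<eta>)"
  unfolding is_norm_fun_def
proof (intro conjI allI)
  fix x :: "real^'a"
  obtain j where j: "wlinf \<eta> x = \<bar>x $ j\<bar> / \<eta> $ j" using wlinf_attained by blast
  show "0 \<le> wlinf \<eta> x" unfolding j by (intro divide_nonneg_pos) (simp_all add: pos)
  show "wlinf \<eta> x = 0 \<longleftrightarrow> x = 0"
  proof
    assume "wlinf \<eta> x = 0"
    then have "\<forall>i. \<bar>x $ i\<bar> / \<eta> $ i \<le> 0" using wlinf_le_iff[of \<eta> x 0] by simp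
    then have h: "\<forall>i. \<bar>x $ i\<bar> / \<eta> $ i \<le> 0" by blast
    have "x $ i = 0" for i
    proof -
      have "\<bar>x $ i\<bar> / \<eta> $ i \<le> 0" using h by blast
      then have "\<bar>x $ i\<bar> \<le> 0" using pos[rule_format, of i] by (simp add: divide_le_0_iff)
      then show ?thesis by simp
    qed
    then have "\<forall>i. x $ i = 0" by blast
    then show "x = 0" by (simp add: vec_eq_iff)
  next
    assume "x = 0"
    then show "wlinf \<eta> x = 0" unfolding j by simp
  qed
next
  fix a :: real and x :: "real^'a"
  obtain j where j: "wlinf \<eta> (a *\<^sub>R x) = \<bar>(a *\<^sub>R x) $ j\<bar> / \<eta> $ j" using wlinf_attained by blast
  obtain k where k: "wlinf \<eta> x = \<bar>x $ k\<bar> / \<eta> $ k" using wlinf_attained by blast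
  have "wlinf \<eta> (a *\<^sub>R x) = \<bar>a\<bar> * (\<bar>x $ j\<bar> / \<eta> $ j)" unfolding j by (simp add: abs_mult)
  also have "\<dots> \<le> \<bar>a\<bar> * wlinf \<eta> x" by (intro mult_left_mono wlinf_ge) simp
  finally have 1: "wlinf \<eta> (a *\<^sub>R x) \<le> \<bar>a\<bar> * wlinf \<eta> x" .
  have "\<bar>a\<bar> * wlinf \<eta> x = \<bar>(a *\<^sub>R x) $ k\<bar> / \<eta> $ k" unfolding k by (simp add: abs_mult)
  also have "\<dots> \<le> wlinf \<eta> (a *\<^sub>R x)" by (rule wlinf_ge)
  finally show "wlinf \<eta> (a *\<^sub>R x) = \<bar>a\<bar> * wlinf \<eta> x" using 1 by simp
next
  fix x y :: "real^'a"
  show "wlinf \<eta> (x + y) \<le> wlinf \<eta> x + wlinf \<eta> y"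
    unfolding wlinf_le_iff
  proof
    fix i
    have "\<bar>(x + y) $ i\<bar> / \<eta> $ i \<le> \<bar>x $ i\<bar> / \<eta> $ i + \<bar>y $ i\<bar> / \<eta> $ i"
      using divide_right_mono[OF abs_triangle_ineq[of "x $ i" "y $ i"], of "\<eta> $ i"] pos[rule_format, of i]
      by (simp add: add_divide_distrib)
    also have "\<dots> \<le> wlinf \<eta> x + wlinf \<eta> y" by (intro add_mono wlinf_ge)
    finally show "\<bar>(x + y) $ i\<bar> / \<eta> $ i \<le> wlinf \<eta> x + wlinf \<eta> y" .
  qed
qed

section \<open>Weighted l1 norm\<close>

lemma wl1_split: "wl1 \<eta> x = \<eta> $ k * \<bar>x $ k\<bar> + (\<Sum>i\<in>UNIV - {k}. \<eta> $ i * \<bar>x $ i\<bar>)"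
  unfolding wl1_def by (rule sum.remove) auto

lemma wl1_norm:
  assumes pos: "\<forall>i. \<eta> $ i > 0"
  shows "is_norm_fun (wl1 \<eta>)"
  unfolding is_norm_fun_def
proof (intro conjI allI)
  fix x :: "real^'a"
  have nn: "\<forall>i\<in>UNIV. 0 \<le> \<eta> $ i * \<bar>x $ i\<bar>" using pos by (simp add: less_imp_le)
  show "0 \<le> wl1 \<eta> x" unfolding wl1_def using nn by (intro sum_nonneg) blast
  show "wl1 \<eta> x = 0 \<longleftrightarrow> x = 0"
  proof
    assume "wl1 \<eta> x = 0"
    then have "\<forall>i\<in>UNIV. \<eta> $ i * \<bar>x $ i\<bar> = 0" unfolding wl1_def
      by (subst (asm) sum_nonneg_eq_0_iff) (use nn in auto)
    then have "\<forall>i. x $ i = 0" using pos by (metis UNIV_I abs_eq_0 less_irrefl mult_eq_0_iff)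
    then show "x = 0" by (simp add: vec_eq_iff)
  next
    assume "x = 0"
    then show "wl1 \<eta> x = 0" unfolding wl1_def by simp
  qed
next
  fix a :: real and x :: "real^'a"
  show "wl1 \<eta> (a *\<^sub>R x) = \<bar>a\<bar> * wl1 \<eta> x"
    unfolding wl1_def by (simp add: sum_distrib_left abs_mult mult_ac)
next
  fix x y :: "real^'a"
  have "wl1 \<eta> (x + y) \<le> (\<Sum>i\<in>UNIV. \<eta> $ i * \<bar>x $ i\<bar> + \<eta> $ i * \<bar>y $ i\<bar>)"
    unfolding wl1_def
  proof (rule sum_mono)
    fix i
    show "\<eta> $ i * \<bar>(x + y) $ i\<bar> \<le> \<eta> $ i * \<bar>x $ i\<bar> + \<eta> $ i * \<bar>y $ i\<bar>"
      using mult_left_mono[OF abs_triangle_ineq[of "x $ i" "y $ i"], of "\<eta> $ i"] pos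
      by (simp add: distrib_left less_imp_le)
  qed
  then show "wl1 \<eta> (x + y) \<le> wl1 \<eta> x + wl1 \<eta> y" unfolding wl1_def by (simp add: sum.distrib)
qed

lemma wl1_ge: "\<forall>i. \<eta> $ i > 0 \<Longrightarrow> \<eta> $ k * \<bar>x $ k\<bar> \<le> wl1 \<eta> x"
  unfolding wl1_split[of \<eta> x k] by (auto intro!: sum_nonneg simp: less_imp_le)

lemma wl1_axis: "wl1 \<eta> (axis k c) = \<eta> $ k * \<bar>c\<bar>"
  unfolding wl1_split[of \<eta> _ k] by (simp add: axis_def)

lemma wl1_add_axis:
  assumes "u $ k = 0"
  shows "wl1 \<eta> (u + axis k c) = wl1 \<eta> u + \<eta> $ k * \<bar>c\<bar>"
proof -
  have "(\<Sum>i\<in>UNIV - {k}. \<eta> $ i * \<bar>(u + axis k c) $ i\<bar>) = (\<Sum>i\<in>UNIV - {k}. \<eta> $ i * \<bar>u $ i\<bar>)"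
    by (rule sum.cong) (auto simp: axis_def)
  then show ?thesis unfolding wl1_split[of \<eta> _ k] using assms by (simp add: axis_def)
qed


lemma small_contra:
  fixes a K :: real
  assumes a: "a > 0" and H: "\<forall>s>0. \<exists>t. 0 < t \<and> t < s \<and> P t" and imp: "\<And>t. 0 < t \<Longrightarrow> t < s0 \<Longrightarrow> P t \<Longrightarrow> a \<le> K * t"
    and s0: "s0 > 0"
  shows False
proof -
  define s where "s = min s0 (a / (\<bar>K\<bar> + 1))"
  have s: "s > 0" using a s0 by (simp add: s_def)
  obtain t where t: "0 < t" "t < s" "P t" using H s by blast
  have "a \<le> K * t" using imp[OF t(1) _ t(3)] t(2) by (simp add: s_def)
  also have "\<dots> \<le> \<bar>K\<bar> * t" using t(1) by (simp add: mult_right_mono)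
  also have "\<dots> \<le> \<bar>K\<bar> * (a / (\<bar>K\<bar> + 1))" using t(1,2) by (intro mult_left_mono) (simp_all add: s_def)
  also have "\<dots> < a" using a by (simp add: field_simps)
  finally show False by simp
qed

lemma linf_sign:
  assumes pos: "\<forall>i. \<eta> $ i > 0"
    and H: "\<forall>s>0. \<exists>t. 0 < t \<and> t < s \<and> wlinf \<eta> (z + t *\<^sub>R d) \<le> wlinf \<eta> z + K * t\<^sup>2"
    and j: "wlinf \<eta> z = \<bar>z $ j\<bar> / \<eta> $ j"
  shows "z $ j * d $ j \<le> 0"
proof (rule ccontr)
  assume "\<not> ?thesis"
  then have zd: "z $ j * d $ j > 0" by simp
  have ej: "\<eta> $ j > 0" using pos by blast
  have "d $ j \<noteq> 0" using zd by auto
  then have dpos: "\<bar>d $ j\<bar> / \<eta> $ j > 0" using ej by (intro divide_pos_pos) simp_all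
  show False
  proof (rule small_contra[OF dpos H _ zero_less_one])
    fix t :: real assume t: "0 < t" "t < 1"
      and P: "wlinf \<eta> (z + t *\<^sub>R d) \<le> wlinf \<eta> z + K * t\<^sup>2"
    have abs: "\<bar>z $ j + t * d $ j\<bar> = \<bar>z $ j\<bar> + t * \<bar>d $ j\<bar>"
    proof (cases "z $ j > 0")
      case True
      then have "d $ j > 0" using zd by (simp add: zero_less_mult_iff)
      then have "t * d $ j > 0" using t by simp
      then show ?thesis using True \<open>d $ j > 0\<close> by simp
    next
      case False
      then have "z $ j < 0" "d $ j < 0" using zd by (auto simp: zero_less_mult_iff)
      then have "t * d $ j < 0" using t by (simp add: mult_pos_neg)
      then show ?thesis using \<open>z $ j < 0\<close> \<open>d $ j < 0\<close> by simp
    qed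
    have "(\<bar>z $ j\<bar> + t * \<bar>d $ j\<bar>) / \<eta> $ j \<le> wlinf \<eta> (z + t *\<^sub>R d)"
      using wlinf_ge[of "z + t *\<^sub>R d" j \<eta>] abs by simp
    then have "(\<bar>z $ j\<bar> + t * \<bar>d $ j\<bar>) / \<eta> $ j \<le> \<bar>z $ j\<bar> / \<eta> $ j + K * t\<^sup>2"
      using P j by simp
    then have "t * (\<bar>d $ j\<bar> / \<eta> $ j) \<le> t * (K * t)"
      by (simp add: add_divide_distrib power2_eq_square mult_ac)
    then show "\<bar>d $ j\<bar> / \<eta> $ j \<le> K * t" using t(1) by (simp only: mult_le_cancel_left_pos)
  qed
qed

lemma l1_sign:
  assumes pos: "\<forall>i. \<eta> $ i > 0" and c: "c \<noteq> 0"
    and H: "\<forall>s>0. \<exists>t. 0 < t \<and> t < s \<and> wl1 \<eta> (axis k c + t *\<^sub>R v) \<le> wl1 \<eta> (axis k c) + K * t\<^sup>2"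
  shows "\<eta> $ k * (sgn c * v $ k) + (\<Sum>i\<in>UNIV - {k}. \<eta> $ i * \<bar>v $ i\<bar>) \<le> 0"
    (is "?A \<le> 0")
proof (rule ccontr)
  assume "\<not> ?thesis"
  then have A: "?A > 0" by simp
  define s0 where "s0 = \<bar>c\<bar> / (\<bar>v $ k\<bar> + 1)"
  have s0: "s0 > 0" using c by (simp add: s0_def)
  show False
  proof (rule small_contra[OF A H _ s0])
    fix t :: real assume t: "0 < t" "t < s0"
      and P: "wl1 \<eta> (axis k c + t *\<^sub>R v) \<le> wl1 \<eta> (axis k c) + K * t\<^sup>2"
    have "t * \<bar>v $ k\<bar> \<le> s0 * \<bar>v $ k\<bar>" using t by (simp add: mult_right_mono)
    also have "\<dots> \<le> \<bar>c\<bar>" using c by (simp add: s0_def field_simps)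
    finally have tv: "t * \<bar>v $ k\<bar> \<le> \<bar>c\<bar>" .
    have abs: "\<bar>c + t * v $ k\<bar> = \<bar>c\<bar> + t * (sgn c * v $ k)"
    proof (cases "c > 0")
      case True
      have "- (t * v $ k) \<le> t * \<bar>v $ k\<bar>" using mult_left_mono[of "- (v $ k)" "\<bar>v $ k\<bar>" t] t by simp
      then show ?thesis using True tv by auto
    next
      case False
      then have "c < 0" using c by simp
      have "t * v $ k \<le> t * \<bar>v $ k\<bar>" using t by (simp add: mult_left_mono)
      then show ?thesis using \<open>c < 0\<close> tv by auto
    qed
    have rest: "(\<Sum>i\<in>UNIV - {k}. \<eta> $ i * \<bar>(axis k c + t *\<^sub>R v) $ i\<bar>) = t * (\<Sum>i\<in>UNIV - {k}. \<eta> $ i * \<bar>v $ i\<bar>)"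
      unfolding sum_distrib_left using t by (intro sum.cong) (auto simp: axis_def abs_mult)
    have "wl1 \<eta> (axis k c + t *\<^sub>R v) = \<eta> $ k * \<bar>c\<bar> + t * ?A"
      unfolding wl1_split[of \<eta> _ k] rest by (simp add: axis_def abs algebra_simps)
    then have "t * ?A \<le> t * (K * t)" using P wl1_axis[of \<eta> k c] by (simp add: power2_eq_square mult.commute mult.left_commute)
    then show "?A \<le> K * t" using t by simp
  qed
qed


lemma wlinf_axis:
  assumes pos: "\<forall>i. \<eta> $ i > 0"
  shows "wlinf \<eta> (axis i c) = \<bar>c\<bar> / \<eta> $ i"
proof (rule antisym)
  show "wlinf \<eta> (axis i c) \<le> \<bar>c\<bar> / \<eta> $ i"
    unfolding wlinf_le_iff using pos[rule_format, of i] by (auto simp: axis_def zero_le_divide_iff)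
  show "\<bar>c\<bar> / \<eta> $ i \<le> wlinf \<eta> (axis i c)"
    using wlinf_ge[of "axis i c" i \<eta>] by (simp add: axis_def)
qed

lemma fs_linf_upper:
  fixes F :: "real^'n \<Rightarrow> real^'n"
  assumes pos: "\<forall>i. \<eta> $ i > 0"
    and MON: "\<And>x y s. s > 0 \<Longrightarrow> \<exists>t. 0 < t \<and> t < s \<and>
       wlinf \<eta> (x - y + t *\<^sub>R (- (F x - F y))) \<le> wlinf \<eta> (x - y) + L * t\<^sup>2 * wlinf \<eta> (F x - F y)"
    and lip: "\<And>x y. wlinf \<eta> (F x - F y) \<le> L * wlinf \<eta> (x - y)" and L: "L > 0"
  shows "(x - y) $ i - (1 / L) * (F x - F y) $ i \<le> \<eta> $ i * wlinf \<eta> (x - y)"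
proof -
  define z where "z = x - y"
  define M where "M = wlinf \<eta> z"
  have ei: "\<eta> $ i > 0" using pos by blast
  have Nn: "is_norm_fun (wlinf \<eta>)" by (rule wlinf_norm[OF pos])
  have M0: "M \<ge> 0" unfolding M_def by (rule nf_nonneg[OF Nn])
  have zi: "\<bar>z $ i\<bar> \<le> \<eta> $ i * M"
    using wlinf_ge[of z i \<eta>] ei unfolding M_def by (simp add: pos_divide_le_eq mult.commute)
  show ?thesis
  proof (cases "M = 0")
    case True
    then have "z = 0" unfolding M_def using nf_eq0[OF Nn] by blast
    then have "x = y" unfolding z_def by simp
    then show ?thesis using nf_zero[OF Nn] by simp
  next
    case False
    then have Mp: "M > 0" using M0 by simp
    define c where "c = \<eta> $ i * M - z $ i"
    have c0: "c \<ge> 0" unfolding c_def using zi by simp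
    define x2 where "x2 = x + axis i c"
    define w where "w = x2 - y"
    have w: "w = z + axis i c" unfolding w_def x2_def z_def by simp
    have wi: "w $ i = \<eta> $ i * M" unfolding w c_def by (simp add: axis_def)
    have wM: "wlinf \<eta> w = \<bar>w $ i\<bar> / \<eta> $ i"
    proof (rule antisym)
      show "wlinf \<eta> w \<le> \<bar>w $ i\<bar> / \<eta> $ i"
        unfolding wlinf_le_iff
      proof
        fix j
        show "\<bar>w $ j\<bar> / \<eta> $ j \<le> \<bar>w $ i\<bar> / \<eta> $ i"
        proof (cases "j = i")
          case False
          then have "w $ j = z $ j" unfolding w by (simp add: axis_def)
          then show ?thesis using wlinf_ge[of z j \<eta>] wi ei Mp unfolding M_def by simp
        qed simp
      qed
    qed (rule wlinf_ge)
    have sgn: "w $ i * (- (F x2 - F y)) $ i \<le> 0"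
    proof (rule linf_sign[OF pos _ wM])
      show "\<forall>s>0. \<exists>t. 0 < t \<and> t < s \<and> wlinf \<eta> (w + t *\<^sub>R - (F x2 - F y))
              \<le> wlinf \<eta> w + L * wlinf \<eta> (F x2 - F y) * t\<^sup>2"
        using MON[of _ x2 y] unfolding w_def by (simp add: mult_ac)
    qed
    have g1: "(F x2 - F y) $ i \<ge> 0"
    proof -
      have "w $ i > 0" using wi ei Mp by simp
      then show ?thesis using sgn by (simp add: mult_le_0_iff)
    qed
    have "\<bar>(F x2 - F x) $ i\<bar> / \<eta> $ i \<le> wlinf \<eta> (F x2 - F x)" by (rule wlinf_ge)
    also have "\<dots> \<le> L * wlinf \<eta> (x2 - x)" by (rule lip)
    also have "\<dots> = L * (c / \<eta> $ i)" unfolding x2_def using wlinf_axis[OF pos, of i c] c0 by simp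
    finally have "\<bar>(F x2 - F x) $ i\<bar> \<le> L * c" using ei by (simp add: divide_le_eq_1 pos_divide_le_eq)
    then have "(F x2 - F x) $ i \<le> L * c" by simp
    then have "(F x - F y) $ i \<ge> - (L * c)" using g1 by simp
    then have "(1 / L) * (F x - F y) $ i \<ge> - c" using L by (simp add: field_simps)
    then show ?thesis unfolding c_def M_def z_def by simp
  qed
qed

lemma fs_linf:
  fixes F :: "real^'n \<Rightarrow> real^'n"
  assumes pos: "\<forall>i. \<eta> $ i > 0"
    and MON: "\<And>x y s. s > 0 \<Longrightarrow> \<exists>t. 0 < t \<and> t < s \<and>
       wlinf \<eta> (x - y + t *\<^sub>R (- (F x - F y))) \<le> wlinf \<eta> (x - y) + L * t\<^sup>2 * wlinf \<eta> (F x - F y)"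
    and lip: "\<And>x y. wlinf \<eta> (F x - F y) \<le> L * wlinf \<eta> (x - y)" and L: "L > 0"
  shows "wlinf \<eta> ((x - (1 / L) *\<^sub>R F x) - (y - (1 / L) *\<^sub>R F y)) \<le> wlinf \<eta> (x - y)"
  unfolding wlinf_le_iff
proof
  fix i
  have Nn: "is_norm_fun (wlinf \<eta>)" by (rule wlinf_norm[OF pos])
  have ei: "\<eta> $ i > 0" using pos by blast
  have u1: "(x - y) $ i - (1 / L) * (F x - F y) $ i \<le> \<eta> $ i * wlinf \<eta> (x - y)"
    by (rule fs_linf_upper[OF pos MON lip L])
  have u2: "(y - x) $ i - (1 / L) * (F y - F x) $ i \<le> \<eta> $ i * wlinf \<eta> (y - x)"
    by (rule fs_linf_upper[OF pos MON lip L])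
  have "wlinf \<eta> (y - x) = wlinf \<eta> (x - y)" by (rule nf_commute[OF Nn, symmetric])
  then have "\<bar>((x - (1 / L) *\<^sub>R F x) - (y - (1 / L) *\<^sub>R F y)) $ i\<bar> \<le> \<eta> $ i * wlinf \<eta> (x - y)"
    using u1 u2 by (simp add: abs_le_iff algebra_simps)
  then show "\<bar>((x - (1 / L) *\<^sub>R F x) - (y - (1 / L) *\<^sub>R F y)) $ i\<bar> / \<eta> $ i \<le> wlinf \<eta> (x - y)"
    using ei by (simp add: pos_divide_le_eq mult.commute)
qed


lemma fs_l1_step:
  fixes F :: "real^'n \<Rightarrow> real^'n"
  assumes pos: "\<forall>i. \<eta> $ i > 0"
    and MON: "\<And>x y s. s > 0 \<Longrightarrow> \<exists>t. 0 < t \<and> t < s \<and>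
       wl1 \<eta> (x - y + t *\<^sub>R (- (F x - F y))) \<le> wl1 \<eta> (x - y) + L * t\<^sup>2 * wl1 \<eta> (F x - F y)"
    and lip: "\<And>x y. wl1 \<eta> (F x - F y) \<le> L * wl1 \<eta> (x - y)" and L: "L > 0"
  shows "wl1 \<eta> (axis k c - (1 / L) *\<^sub>R (F (p + axis k c) - F p)) \<le> \<eta> $ k * \<bar>c\<bar>"
proof (cases "c = 0")
  case True
  have ax: "axis k (0::real) = (0::real^'n)" by (simp add: vec_eq_iff axis_def)
  show ?thesis unfolding True ax using nf_zero[OF wl1_norm[OF pos]] by simp
next
  case False
  define D where "D = F (p + axis k c) - F p"
  define S where "S = (\<Sum>i\<in>UNIV - {k}. \<eta> $ i * \<bar>D $ i\<bar>)"
  have ek: "\<eta> $ k > 0" using pos by blast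
  have S0: "S \<ge> 0" unfolding S_def using pos by (intro sum_nonneg) (simp add: less_imp_le)
  have H: "\<forall>s>0. \<exists>t. 0 < t \<and> t < s \<and> wl1 \<eta> (axis k c + t *\<^sub>R (- D)) \<le> wl1 \<eta> (axis k c) + (L * wl1 \<eta> D) * t\<^sup>2"
    using MON[of _ "p + axis k c" p] unfolding D_def by (simp add: mult_ac)
  have sg: "\<eta> $ k * (sgn c * (- D) $ k) + (\<Sum>i\<in>UNIV - {k}. \<eta> $ i * \<bar>(- D) $ i\<bar>) \<le> 0"
    by (rule l1_sign[OF pos False H])
  then have sg': "S \<le> \<eta> $ k * (sgn c * D $ k)" unfolding S_def by simp
  have "\<eta> $ k * \<bar>D $ k\<bar> \<le> wl1 \<eta> D" by (rule wl1_ge[OF pos])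
  also have "\<dots> \<le> L * wl1 \<eta> (axis k c)" unfolding D_def using lip[of "p + axis k c" p] by simp
  also have "\<dots> = \<eta> $ k * (L * \<bar>c\<bar>)" by (simp add: wl1_axis)
  finally have Dk: "\<bar>D $ k\<bar> \<le> L * \<bar>c\<bar>" using ek by simp
  have sD: "sgn c * D $ k \<ge> 0"
  proof -
    have "0 \<le> \<eta> $ k * (sgn c * D $ k)" using S0 sg' by linarith
    then show ?thesis using ek by (simp add: zero_le_mult_iff)
  qed
  define g where "g = 1 / L"
  have g: "g > 0" "g * L = 1" using L by (simp_all add: g_def)
  have gD: "g * \<bar>D $ k\<bar> \<le> \<bar>c\<bar>"
  proof -
    have "g * \<bar>D $ k\<bar> \<le> g * (L * \<bar>c\<bar>)" using Dk g by (simp add: mult_left_mono)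
    then show ?thesis using g by (simp add: mult.assoc[symmetric])
  qed
  have absk: "\<bar>c - g * D $ k\<bar> = \<bar>c\<bar> - g * (sgn c * D $ k)"
  proof (cases "c > 0")
    case True
    then have "D $ k \<ge> 0" using sD by simp
    then show ?thesis using True gD g by simp
  next
    case False
    then have "c < 0" using \<open>c \<noteq> 0\<close> by simp
    then have "D $ k \<le> 0" using sD by simp
    then show ?thesis using \<open>c < 0\<close> gD g by simp
  qed
  have rest: "(\<Sum>i\<in>UNIV - {k}. \<eta> $ i * \<bar>(axis k c - g *\<^sub>R D) $ i\<bar>) = g * S"
    unfolding S_def sum_distrib_left using g by (intro sum.cong) (auto simp: axis_def abs_mult)
  have "wl1 \<eta> (axis k c - g *\<^sub>R D) = \<eta> $ k * \<bar>c - g * D $ k\<bar> + g * S"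
    unfolding wl1_split[of \<eta> _ k] rest by (simp add: axis_def)
  also have "\<dots> = \<eta> $ k * \<bar>c\<bar> - g * (\<eta> $ k * (sgn c * D $ k)) + g * S"
    unfolding absk by (simp add: algebra_simps)
  also have "\<dots> \<le> \<eta> $ k * \<bar>c\<bar>" using mult_left_mono[OF sg', of g] g by simp
  finally show ?thesis unfolding D_def g_def .
qed

lemma fs_l1:
  fixes F :: "real^'n \<Rightarrow> real^'n"
  assumes pos: "\<forall>i. \<eta> $ i > 0"
    and MON: "\<And>x y s. s > 0 \<Longrightarrow> \<exists>t. 0 < t \<and> t < s \<and>
       wl1 \<eta> (x - y + t *\<^sub>R (- (F x - F y))) \<le> wl1 \<eta> (x - y) + L * t\<^sup>2 * wl1 \<eta> (F x - F y)"
    and lip: "\<And>x y. wl1 \<eta> (F x - F y) \<le> L * wl1 \<eta> (x - y)" and L: "L > 0"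
  shows "wl1 \<eta> ((x - (1 / L) *\<^sub>R F x) - (y - (1 / L) *\<^sub>R F y)) \<le> wl1 \<eta> (x - y)"
proof -
  have Nn: "is_norm_fun (wl1 \<eta>)" by (rule wl1_norm[OF pos])
  define z where "z = x - y"
  define p where "p = (\<lambda>S. y + (\<chi> j. if j \<in> S then z $ j else 0))"
  define g where "g = 1 / L"
  have "finite S \<Longrightarrow> wl1 \<eta> (p S - y - g *\<^sub>R (F (p S) - F y)) \<le> wl1 \<eta> (p S - y)" for S
  proof (induction S rule: finite_induct)
    case empty
    have "p {} = y" unfolding p_def by (simp add: vec_eq_iff)
    then show ?case by simp
  next
    case (insert k S)
    have pk: "p (insert k S) = p S + axis k (z $ k)"
      unfolding p_def using insert(2) by (auto simp: vec_eq_iff axis_def)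
    have zk: "(p S - y) $ k = 0" unfolding p_def using insert(2) by simp
    have eq: "p (insert k S) - y - g *\<^sub>R (F (p (insert k S)) - F y)
      = (p S - y - g *\<^sub>R (F (p S) - F y)) + (axis k (z $ k) - g *\<^sub>R (F (p S + axis k (z $ k)) - F (p S)))"
      unfolding pk by (simp add: algebra_simps)
    have "wl1 \<eta> (p (insert k S) - y - g *\<^sub>R (F (p (insert k S)) - F y))
        \<le> wl1 \<eta> (p S - y - g *\<^sub>R (F (p S) - F y)) + wl1 \<eta> (axis k (z $ k) - g *\<^sub>R (F (p S + axis k (z $ k)) - F (p S)))"
      unfolding eq by (rule nf_tri[OF Nn])
    also have "\<dots> \<le> wl1 \<eta> (p S - y) + \<eta> $ k * \<bar>z $ k\<bar>"
      using insert(3) fs_l1_step[OF pos MON lip L, of k "z $ k" "p S"] unfolding g_def by linarith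
    also have "\<dots> = wl1 \<eta> (p S - y + axis k (z $ k))" by (rule wl1_add_axis[OF zk, symmetric])
    also have "\<dots> = wl1 \<eta> (p (insert k S) - y)" unfolding pk by (simp add: algebra_simps)
    finally show ?case .
  qed
  then have "wl1 \<eta> (p UNIV - y - g *\<^sub>R (F (p UNIV) - F y)) \<le> wl1 \<eta> (p UNIV - y)" by simp
  moreover have "p UNIV = x" unfolding p_def z_def by (simp add: vec_eq_iff)
  ultimately show ?thesis unfolding g_def by (simp add: algebra_simps)
qed


locale km =
  fixes N :: "real^'n \<Rightarrow> real" and T :: "real^'n \<Rightarrow> real^'n" and lam :: real and x :: "nat \<Rightarrow> real^'n"
  assumes N: "is_norm_fun N"
    and ne: "\<And>a b. N (T a - T b) \<le> N (a - b)"
    and lam: "0 < lam" "lam < 1"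
    and iter: "\<And>k. x (Suc k) = (1 - lam) *\<^sub>R x k + lam *\<^sub>R T (x k)"
begin

definition d :: "nat \<Rightarrow> real" where "d k = N (x k - T (x k))"

lemma d_nonneg: "d k \<ge> 0"
  unfolding d_def by (rule nf_nonneg[OF N])

lemma step_dist: "N (x (Suc k) - x k) = lam * d k"
proof -
  have "x (Suc k) - x k = lam *\<^sub>R (T (x k) - x k)" unfolding iter by (simp add: algebra_simps)
  then show ?thesis using nf_scale[OF N] nf_commute[OF N, of "T (x k)" "x k"] lam unfolding d_def by simp
qed

lemma d_dec: "d (Suc k) \<le> d k"
proof -
  have eq: "x (Suc k) - T (x (Suc k)) = (1 - lam) *\<^sub>R (x k - T (x k)) + (T (x k) - T (x (Suc k)))"
    unfolding iter[of k] by (simp add: algebra_simps)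
  have "d (Suc k) \<le> N ((1 - lam) *\<^sub>R (x k - T (x k))) + N (T (x k) - T (x (Suc k)))"
    unfolding d_def eq by (rule nf_tri[OF N])
  also have "\<dots> \<le> (1 - lam) * d k + N (x k - x (Suc k))"
    using nf_scale[OF N, of "1 - lam"] ne[of "x k" "x (Suc k)"] lam unfolding d_def by simp
  also have "N (x k - x (Suc k)) = lam * d k" using step_dist nf_commute[OF N] by metis
  finally show ?thesis by (simp add: algebra_simps)
qed

lemma d_decseq: "decseq d"
  using d_dec by (simp add: decseq_SucI)

lemma fix_dec:
  assumes "T p = p"
  shows "N (x (Suc k) - p) \<le> N (x k - p)"
proof -
  have eq: "x (Suc k) - p = (1 - lam) *\<^sub>R (x k - p) + lam *\<^sub>R (T (x k) - T p)"
    unfolding iter assms by (simp add: algebra_simps)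
  have "N (x (Suc k) - p) \<le> N ((1 - lam) *\<^sub>R (x k - p)) + N (lam *\<^sub>R (T (x k) - T p))"
    unfolding eq by (rule nf_tri[OF N])
  also have "\<dots> \<le> (1 - lam) * N (x k - p) + lam * N (x k - p)"
    using nf_scale[OF N] lam ne[of "x k" p] by (simp add: mult_left_mono)
  finally show ?thesis by (simp add: algebra_simps)
qed

lemma fix_bound:
  assumes "T p = p"
  shows "N (x k - p) \<le> N (x 0 - p)"
proof (induction k)
  case (Suc k) then show ?case using fix_dec[OF assms, of k] by linarith
qed simp

lemma far_dist: "N (x (i + m) - x i) \<le> lam * m * d i"
proof (induction m)
  case 0 then show ?case using N by simp
next
  case (Suc m)
  have "N (x (i + Suc m) - x i) \<le> N (x (Suc (i + m)) - x (i + m)) + N (x (i + m) - x i)"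
    using nf_tri_diff[OF N] by simp
  also have "\<dots> \<le> lam * d (i + m) + lam * m * d i" using step_dist Suc by simp
  also have "d (i + m) \<le> d i" using d_decseq by (simp add: decseq_def)
  then have "lam * d (i + m) \<le> lam * d i" using lam by simp
  then have "lam * d (i + m) + lam * m * d i \<le> lam * (Suc m) * d i" by (simp add: algebra_simps)
  finally show ?case .
qed

lemma ishikawa:
  "(1 + n * lam) * d i + (1 / (1 - lam)) ^ n * (d (i + n) - d i) \<le> N (T (x (i + n)) - x i)"
proof (induction n arbitrary: i)
  case 0 then show ?case unfolding d_def using nf_commute[OF N] by simp
next
  case (Suc n)
  define a where "a = 1 / (1 - lam)"
  define A where "A = a ^ n"
  define u where "u = T (x (i + Suc n))"
  define X where "X = N (u - x i)"
  define Y where "Y = N (u - x (Suc i))"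
  define Z where "Z = N (u - T (x i))"
  have a: "a * (1 - lam) = 1" using lam by (simp add: a_def)
  have a1: "a \<ge> 1 + lam"
  proof -
    have "(1 + lam) * (1 - lam) \<le> 1" by (simp add: algebra_simps)
    then show ?thesis using lam by (simp add: a_def pos_le_divide_eq)
  qed
  have AB: "A \<ge> 1 + n * lam"
  proof -
    have "1 + n * lam \<le> (1 + lam) ^ n" using Bernoulli_inequality[of lam n] lam by simp
    also have "\<dots> \<le> a ^ n" using a1 lam by (intro power_mono) simp_all
    finally show ?thesis by (simp add: A_def)
  qed
  have e1: "u - x (Suc i) = (1 - lam) *\<^sub>R (u - x i) + lam *\<^sub>R (u - T (x i))"
    unfolding iter by (simp add: algebra_simps)
  have f1: "(1 - lam) * X \<ge> Y - lam * Z"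
  proof -
    have "Y \<le> N ((1 - lam) *\<^sub>R (u - x i)) + N (lam *\<^sub>R (u - T (x i)))"
      unfolding Y_def e1 by (rule nf_tri[OF N])
    then show ?thesis using nf_scale[OF N] lam unfolding X_def Z_def by simp
  qed
  have f2: "Z \<le> lam * (Suc n) * d i"
  proof -
    have "Z \<le> N (x (i + Suc n) - x i)" unfolding Z_def u_def by (rule ne)
    also have "\<dots> \<le> lam * (Suc n) * d i" by (rule far_dist)
    finally show ?thesis .
  qed
  have f3: "(1 + n * lam) * d (Suc i) + A * (d (i + Suc n) - d (Suc i)) \<le> Y"
    using Suc[of "Suc i"] unfolding Y_def u_def A_def a_def by simp
  have f4: "d (Suc i) \<le> d i" by (rule d_dec)
  have P1: "(A - (1 + n * lam)) * (d i - d (Suc i)) \<ge> 0" using AB f4 by simp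
  have P2: "lam * Z \<le> lam * (lam * (Suc n) * d i)" using f2 lam by (simp add: mult_left_mono)
  have key: "(1 - lam) * X \<ge> (1 - lam) * ((1 + (Suc n) * lam) * d i) + A * (d (i + Suc n) - d i)"
  proof -
    have "(1 - lam) * X \<ge> (1 + n * lam) * d (Suc i) + A * (d (i + Suc n) - d (Suc i)) - lam * (lam * (Suc n) * d i)"
      using f1 f3 P2 by linarith
    moreover have "(1 + n * lam) * d (Suc i) + A * (d (i + Suc n) - d (Suc i)) - lam * (lam * (Suc n) * d i)
        - ((1 - lam) * ((1 + (Suc n) * lam) * d i) + A * (d (i + Suc n) - d i))
        = (A - (1 + n * lam)) * (d i - d (Suc i))"
      by (simp add: algebra_simps)
    ultimately show ?thesis using P1 by linarith
  qed
  have "(1 + (Suc n) * lam) * d i + a * A * (d (i + Suc n) - d i) \<le> X"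
  proof -
    have "(1 - lam) * ((1 + (Suc n) * lam) * d i + a * A * (d (i + Suc n) - d i))
        = (1 - lam) * ((1 + (Suc n) * lam) * d i) + (a * (1 - lam)) * A * (d (i + Suc n) - d i)"
      by (simp add: algebra_simps)
    also have "\<dots> = (1 - lam) * ((1 + (Suc n) * lam) * d i) + A * (d (i + Suc n) - d i)" using a by simp
    finally have "(1 - lam) * ((1 + (Suc n) * lam) * d i + a * A * (d (i + Suc n) - d i)) \<le> (1 - lam) * X"
      using key by linarith
    then show ?thesis using lam by (simp add: mult_le_cancel_left_pos)
  qed
  then show ?case unfolding X_def u_def A_def a_def by (simp add: mult.assoc)
qed


lemma d_tendsto_0:
  assumes fp: "T p = p"
  shows "d \<longlonglongrightarrow> 0"
proof -
  define R where "R = N (x 0 - p)"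
  have B: "N (T (x m) - x i) \<le> 2 * R" for m i
  proof -
    have "N (T (x m) - x i) \<le> N (T (x m) - T p) + N (T p - x i)" by (rule nf_tri_diff[OF N])
    also have "\<dots> \<le> N (x m - p) + N (x i - p)"
      using ne[of "x m" p] nf_commute[OF N, of p "x i"] fp by simp
    also have "\<dots> \<le> 2 * R" using fix_bound[OF fp, of m] fix_bound[OF fp, of i] unfolding R_def by simp
    finally show ?thesis .
  qed
  obtain r where r: "d \<longlonglongrightarrow> r" "\<forall>i. r \<le> d i"
    using decseq_convergent[OF d_decseq, of 0] d_nonneg by blast
  have r0: "r \<ge> 0" using r(1) d_nonneg by (intro LIMSEQ_le_const) auto
  have rb: "(1 + n * lam) * r \<le> 2 * R" for n :: nat
  proof -
    define a where "a = (1 / (1 - lam)) ^ n"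
    have lim: "(\<lambda>i. 2 * R + a * (d i - d (i + n))) \<longlonglongrightarrow> 2 * R + a * (r - r)"
      by (intro tendsto_intros r(1) LIMSEQ_ignore_initial_segment)
    have "(1 + n * lam) * r \<le> 2 * R + a * (d i - d (i + n))" for i
    proof -
      have "(1 + n * lam) * r \<le> (1 + n * lam) * d i" using r(2) lam by (intro mult_left_mono) simp_all
      also have "\<dots> \<le> N (T (x (i + n)) - x i) - a * (d (i + n) - d i)"
        using ishikawa[of n i] unfolding a_def by linarith
      also have "\<dots> \<le> 2 * R + a * (d i - d (i + n))" using B[of "i + n" i] by (simp add: algebra_simps)
      finally show ?thesis .
    qed
    then show ?thesis using LIMSEQ_le_const[OF lim] by simp
  qed
  have "r \<le> 0"
  proof (rule ccontr)
    assume "\<not> r \<le> 0"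
    then have rp: "r > 0" by simp
    obtain n :: nat where n: "2 * R / (r * lam) < n" using reals_Archimedean2 by blast
    then have "2 * R < n * (r * lam)" using rp lam by (simp add: pos_divide_less_eq)
    also have "\<dots> \<le> (1 + n * lam) * r" using rp by (simp add: algebra_simps)
    finally show False using rb[of n] by simp
  qed
  then have "r = 0" using r0 by simp
  then show ?thesis using r(1) by simp
qed

lemma T_cont: "continuous_on UNIV T"
proof -
  obtain C where C: "C > 0" "\<And>x. N x \<le> C * norm x" using nf_upper[OF N] by blast
  obtain c where c: "c > 0" "\<And>x. norm x \<le> c * N x" using nf_lower[OF N] by blast
  have "(c * C)-lipschitz_on UNIV T"
  proof (rule lipschitz_onI)
    fix a b :: "real^'n"
    have "dist (T a) (T b) \<le> c * N (T a - T b)" using c(2) by (simp add: dist_norm)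
    also have "\<dots> \<le> c * N (a - b)" using ne c(1) by (simp add: mult_left_mono)
    also have "\<dots> \<le> c * (C * norm (a - b))" using C(2) c(1) by (simp add: mult_left_mono)
    finally show "dist (T a) (T b) \<le> c * C * dist a b" by (simp add: dist_norm mult.assoc)
  qed (use c C in simp)
  then show ?thesis by (rule lipschitz_on_continuous_on)
qed

lemma km_conv:
  assumes fp: "T p = p"
  shows "\<exists>q. T q = q \<and> x \<longlonglongrightarrow> q"
proof -
  obtain c where c: "c > 0" "\<And>x. norm x \<le> c * N x" using nf_lower[OF N] by blast
  have "norm (x k) \<le> c * N (x 0 - p) + norm p" for k
  proof -
    have "norm (x k) \<le> norm (x k - p) + norm p" by (metis norm_triangle_sub add.commute)
    also have "norm (x k - p) \<le> c * N (x k - p)" by (rule c)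
    also have "\<dots> \<le> c * N (x 0 - p)" using fix_bound[OF fp, of k] c(1) by (simp add: mult_left_mono)
    finally show ?thesis by simp
  qed
  then have "bounded (range x)" unfolding bounded_iff by blast
  then obtain q \<sigma> where \<sigma>: "strict_mono \<sigma>" "(x \<circ> \<sigma>) \<longlonglongrightarrow> q"
    using bounded_imp_convergent_subsequence by blast
  have c1: "continuous_on UNIV (\<lambda>y. N (y - T y))"
  proof -
    have "continuous_on UNIV (\<lambda>y. y - T y)" by (intro continuous_intros T_cont)
    then show ?thesis by (rule continuous_on_compose2[OF nf_continuous[OF N]]) auto
  qed
  then have "isCont (\<lambda>y. N (y - T y)) q" using continuous_on_eq_continuous_at open_UNIV by blast
  then have "(\<lambda>k. N ((x \<circ> \<sigma>) k - T ((x \<circ> \<sigma>) k))) \<longlonglongrightarrow> N (q - T q)"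
    using isCont_tendsto_compose[OF _ \<sigma>(2)] by blast
  moreover have "(\<lambda>k. N ((x \<circ> \<sigma>) k - T ((x \<circ> \<sigma>) k))) \<longlonglongrightarrow> 0"
    using LIMSEQ_subseq_LIMSEQ[OF d_tendsto_0[OF fp] \<sigma>(1)] unfolding d_def comp_def by simp
  ultimately have "N (q - T q) = 0" using LIMSEQ_unique by blast
  then have fq: "T q = q" using nf_eq0[OF N] by simp
  define e where "e k = N (x k - q)" for k
  have "decseq e" unfolding e_def using fix_dec[OF fq] by (simp add: decseq_SucI)
  then obtain L where L: "e \<longlonglongrightarrow> L" using decseq_convergent[of e 0] nf_nonneg[OF N] unfolding e_def by blast
  have c2: "continuous_on UNIV (\<lambda>y. N (y - q))"
  proof -
    have "continuous_on UNIV (\<lambda>y. y - q)" by (intro continuous_intros)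
    then show ?thesis by (rule continuous_on_compose2[OF nf_continuous[OF N]]) auto
  qed
  then have "isCont (\<lambda>y. N (y - q)) q" using continuous_on_eq_continuous_at open_UNIV by blast
  then have "(\<lambda>k. N ((x \<circ> \<sigma>) k - q)) \<longlonglongrightarrow> N (q - q)"
    using isCont_tendsto_compose[OF _ \<sigma>(2)] by blast
  then have "(e \<circ> \<sigma>) \<longlonglongrightarrow> 0" unfolding e_def comp_def using N by simp
  moreover have "(e \<circ> \<sigma>) \<longlonglongrightarrow> L" by (rule LIMSEQ_subseq_LIMSEQ[OF L \<sigma>(1)])
  ultimately have "L = 0" using LIMSEQ_unique by blast
  then have "(\<lambda>k. N (x k - q)) \<longlonglongrightarrow> 0" using L unfolding e_def by simp
  then have "x \<longlonglongrightarrow> q" by (rule conv_from_N[OF N])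
  then show ?thesis using fq by blast
qed

end


lemma part2:
  fixes F :: "real^'n \<Rightarrow> real^'n" and x0 :: "real^'n"
  assumes cont: "continuous_on UNIV F" and pos: "\<forall>i. \<eta> $ i > 0"
    and Nc: "N = wl1 \<eta> \<or> N = wlinf \<eta>" and mon: "monotone_wrt N F 0"
    and lipw: "lipschitz_wrt N F" and zero: "{x. F x = 0} \<noteq> {}" and al: "\<alpha> > 0"
  shows "\<exists>xs. F xs = 0 \<and> proximal_iter \<alpha> F x0 \<longlonglongrightarrow> xs"
proof -
  have Nn: "is_norm_fun N" using Nc wl1_norm[OF pos] wlinf_norm[OF pos] by blast
  obtain W where W: "weak_pairing W" "wp_compatible W N" "deimling_ineq W N" "curve_norm_deriv W N"
    and mono: "\<And>x y. 0 * (N (x - y))\<^sup>2 \<le> - W (- (F x - F y)) (x - y)"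
    using mon unfolding monotone_wrt_def by blast
  have mono': "W (- (F x - F y)) (x - y) \<le> 0" for x y using mono[of x y] by simp
  obtain L0 where L0: "\<And>x y. N (F x - F y) \<le> L0 * N (x - y)" using lipw unfolding lipschitz_wrt_def by blast
  define L where "L = max L0 1"
  have L: "L > 0" unfolding L_def by simp
  have lip: "N (F x - F y) \<le> L * N (x - y)" for x y
  proof -
    have "L0 * N (x - y) \<le> L * N (x - y)" unfolding L_def using nf_nonneg[OF Nn, of "x - y"]
      by (intro mult_right_mono) simp_all
    then show ?thesis using L0[of x y] by linarith
  qed
  have MON: "\<exists>t. 0 < t \<and> t < s \<and> N (x - y + t *\<^sub>R (- (F x - F y))) \<le> N (x - y) + L * t\<^sup>2 * N (F x - F y)"
    if "s > 0" for x y s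
    by (rule mon_quad[OF Nn W(1,2,4) mono' lip that])
  define g where "g = 1 / L"
  define S where "S = (\<lambda>x. x - g *\<^sub>R F x)"
  have Sne: "N (S a - S b) \<le> N (a - b)" for a b
    using Nc
  proof
    assume "N = wl1 \<eta>"
    then show ?thesis unfolding S_def g_def using fs_l1[OF pos _ _ L, of F] MON lip by simp
  next
    assume "N = wlinf \<eta>"
    then show ?thesis unfolding S_def g_def using fs_linf[OF pos _ _ L, of F] MON lip by simp
  qed
  define G where "G = (\<lambda>x::real^'n. x + \<alpha> *\<^sub>R F x)"
  have expG: "1 * N (x - y) \<le> N (G x - G y)" for x y
  proof -
    have "(1 + \<alpha> * 0) * (N (x - y))\<^sup>2 \<le> - W (- ((x + \<alpha> *\<^sub>R F x) - (y + \<alpha> *\<^sub>R F y))) (x - y)"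
      by (rule resolvent_strong_mono[OF W(1,2) Nn W(3) mono]) (use al in simp)
    then have "1 * (N (x - y))\<^sup>2 \<le> - W (- (G x - G y)) (x - y)" unfolding G_def by simp
    then show ?thesis by (rule expand_of_mono[OF W(1,2) Nn])
  qed
  have uG: "\<exists>!y. y + \<alpha> *\<^sub>R F y = z" for z
    using expand_bij[OF Nn cont_G[OF cont] zero_less_one expG[unfolded G_def]] .
  define J where "J = resolvent \<alpha> F"
  have JG: "J a + \<alpha> *\<^sub>R F (J a) = a" for a unfolding J_def by (rule resolvent_eq[OF uG])
  have Jne: "N (J a - J b) \<le> N (a - b)" for a b
    using expG[of "J a" "J b"] JG[of a] JG[of b] unfolding G_def by simp
  define T where "T = (\<lambda>a. S (J a))"
  have Tne: "N (T a - T b) \<le> N (a - b)" for a b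
    unfolding T_def using Sne[of "J a" "J b"] Jne[of a b] by linarith
  define \<beta> where "\<beta> = \<alpha> * L"
  define lam where "lam = \<beta> / (1 + \<beta>)"
  have bp: "\<beta> > 0" unfolding \<beta>_def using al L by simp
  have lam: "0 < lam" "lam < 1" unfolding lam_def using bp by simp_all
  have h1: "(1 - lam) * (1 + \<beta>) = 1" unfolding lam_def using bp by (simp add: field_simps)
  have h2: "lam - (1 - lam) * \<beta> = 0" unfolding lam_def using bp by (simp add: field_simps)
  have Jform: "J a = (1 - lam) *\<^sub>R a + lam *\<^sub>R T a" for a
  proof -
    define y where "y = J a"
    have Fy: "F y = L *\<^sub>R (y - S y)" unfolding S_def g_def using L by simp
    have a: "a = (1 + \<beta>) *\<^sub>R y - \<beta> *\<^sub>R S y"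
      using JG[of a] unfolding y_def[symmetric] Fy \<beta>_def by (simp add: algebra_simps)
    have "(1 - lam) *\<^sub>R a + lam *\<^sub>R S y = ((1 - lam) * (1 + \<beta>)) *\<^sub>R y + (lam - (1 - lam) * \<beta>) *\<^sub>R S y"
      unfolding a by (simp add: algebra_simps)
    also have "\<dots> = y" unfolding h1 h2 by simp
    finally show ?thesis unfolding T_def y_def by simp
  qed
  let ?x = "proximal_iter \<alpha> F x0"
  interpret km N T lam ?x
  proof
    show "is_norm_fun N" by (rule Nn)
    show "N (T a - T b) \<le> N (a - b)" for a b by (rule Tne)
    show "0 < lam" "lam < 1" by (rule lam)+
    show "?x (Suc k) = (1 - lam) *\<^sub>R ?x k + lam *\<^sub>R T (?x k)" for k
      unfolding proximal_iter_Suc J_def[symmetric] by (rule Jform)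
  qed
  obtain p where p: "F p = 0" using zero by blast
  have Jp: "J p = p" unfolding J_def by (rule resolvent_unique[OF uG]) (simp add: p)
  have Tp: "T p = p" unfolding T_def Jp S_def using p by simp
  obtain q where q: "T q = q" "?x \<longlonglongrightarrow> q" using km_conv[OF Tp] by blast
  have "J q = q" using Jform[of q] q(1) by (simp add: algebra_simps)
  then have "\<alpha> *\<^sub>R F q = 0" using JG[of q] by simp
  then have "F q = 0" using al by simp
  then show ?thesis using q(2) by blast
qed


theorem theorem28:
  fixes F :: "real^'n \<Rightarrow> real^'n" and x0 :: "real^'n"
  assumes "continuous_on UNIV F"
  shows "(\<forall>N c \<alpha>. is_norm_fun N \<and> monotone_wrt N F c \<and> c > 0 \<and> \<alpha> > 0 \<longrightarrow>
            (\<exists>xs. F xs = 0 \<and> (\<forall>y. F y = 0 \<longrightarrow> y = xs) \<and>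
                  proximal_iter \<alpha> F x0 \<longlonglongrightarrow> xs \<and>
                  (\<forall>k. N (proximal_iter \<alpha> F x0 (Suc k) - xs)
                        \<le> 1 / (1 + \<alpha> * c) * N (proximal_iter \<alpha> F x0 k - xs))))
       \<and> (\<forall>N \<eta> \<alpha>. (\<forall>i. \<eta> $ i > 0) \<and> (N = wl1 \<eta> \<or> N = wlinf \<eta>) \<and>
            monotone_wrt N F 0 \<and> lipschitz_wrt N F \<and> diagL F \<noteq> 0 \<and>
            {x. F x = 0} \<noteq> {} \<and> \<alpha> > 0 \<longrightarrow>
            (\<exists>xs. F xs = 0 \<and> proximal_iter \<alpha> F x0 \<longlonglongrightarrow> xs))"
proof (intro conjI allI impI)
  fix N :: "real^'n \<Rightarrow> real" and c \<alpha> :: real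
  assume h: "is_norm_fun N \<and> monotone_wrt N F c \<and> c > 0 \<and> \<alpha> > 0"
  show "\<exists>xs. F xs = 0 \<and> (\<forall>y. F y = 0 \<longrightarrow> y = xs) \<and>
                  proximal_iter \<alpha> F x0 \<longlonglongrightarrow> xs \<and>
                  (\<forall>k. N (proximal_iter \<alpha> F x0 (Suc k) - xs)
                        \<le> 1 / (1 + \<alpha> * c) * N (proximal_iter \<alpha> F x0 k - xs))"
    using part1[OF assms] h by blast
next
  fix N :: "real^'n \<Rightarrow> real" and \<eta> :: "real^'n" and \<alpha> :: real
  assume h: "(\<forall>i. \<eta> $ i > 0) \<and> (N = wl1 \<eta> \<or> N = wlinf \<eta>) \<and>
            monotone_wrt N F 0 \<and> lipschitz_wrt N F \<and> diagL F \<noteq> 0 \<and>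
            {x. F x = 0} \<noteq> {} \<and> \<alpha> > 0"
  show "\<exists>xs. F xs = 0 \<and> proximal_iter \<alpha> F x0 \<longlonglongrightarrow> xs"
    using part2[OF assms, of \<eta> N \<alpha> x0] h by blast
qed

end
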